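(* Let $-1/2\le\lambda<1$ and $0\le\beta\le 2\lambda+1$. Then $C_\beta[f]\in\mathcal{S}$ for every $f\in\mathcal{S}^*(\lambda)$.
   Context: $\mathbb{D}$ is the open unit disk; $\mathcal{A}$ the class of analytic $f$ on $\mathbb{D}$ with $f(0)=0$, $f'(0)=1$; $\mathcal{S}\subset\mathcal{A}$ the univalent functions. For $\lambda<1$, $\mathcal{S}^*(\lambda)=\{f\in\mathcal{A}: f(z)\ne0 \text{ for } z\ne0,\ \mathrm{Re}\,(zf'(z)/f(z))>\lambda \text{ on }\mathbb{D}\}$. For $\beta\ge0$ and $f$ analytic on $\mathbb{D}$ with $f(0)=0$, the $\beta$-Cesàro transform is $C_\beta[f](z)=\int_0^z \frac{f(w)}{w(1-w)^\beta}\,dw$ (principal branch of $(1-w)^\beta$). *)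

theory Defs
  imports "HOL-Complex_Analysis.Complex_Analysis"
begin

definition classA :: "(complex \<Rightarrow> complex) \<Rightarrow> bool" where
  "classA f \<longleftrightarrow> f holomorphic_on ball 0 1 \<and> f 0 = 0 \<and> deriv f 0 = 1"

definition classS :: "(complex \<Rightarrow> complex) \<Rightarrow> bool" where
  "classS f \<longleftrightarrow> classA f \<and> inj_on f (ball 0 1)"

text \<open>Starlike functions of order lam. At z = 0 the quotient z f'(z)/f(z) is
  understood as its limit 1 > lam, so the condition is only imposed for z \<noteq> 0.\<close>
definition starlike_of_order :: "real \<Rightarrow> (complex \<Rightarrow> complex) \<Rightarrow> bool" where
  "starlike_of_order lam f \<longleftrightarrow> classA f \<and>
     (\<forall>z\<in>ball 0 1. z \<noteq> 0 \<longrightarrow> f z \<noteq> 0) \<and>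
     (\<forall>z\<in>ball 0 1. z \<noteq> 0 \<longrightarrow> Re (z * deriv f z / f z) > lam)"

text \<open>beta-Cesaro transform: integral along the segment from 0 to z, with the
  principal branch (1-w) powr beta = exp (beta * Ln (1-w)).\<close>
definition cesaro :: "real \<Rightarrow> (complex \<Rightarrow> complex) \<Rightarrow> complex \<Rightarrow> complex" where
  "cesaro beta f z = contour_integral (linepath 0 z)
      (\<lambda>w. f w / (w * (1 - w) powr complex_of_real beta))"

end

theory Submission
  imports Defs
begin

lemma vd_Re:
  assumes "(f has_vector_derivative f') (at t)"
  shows "((\<lambda>t. Re (f t)) has_real_derivative Re f') (at t)"
proof -
  have "((\<lambda>t. Re (f t)) has_derivative (\<lambda>h. Re (h *\<^sub>R f'))) (at t)"
    using bounded_linear.has_derivative[OF bounded_linear_Re assms[unfolded has_vector_derivative_def]] .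
  then show ?thesis
    by (simp add: has_field_derivative_def mult.commute[of _ "Re f'"] mult.commute[of _ "Im f'"])
qed

lemma vd_Im:
  assumes "(f has_vector_derivative f') (at t)"
  shows "((\<lambda>t. Im (f t)) has_real_derivative Im f') (at t)"
proof -
  have "((\<lambda>t. Im (f t)) has_derivative (\<lambda>h. Im (h *\<^sub>R f'))) (at t)"
    using bounded_linear.has_derivative[OF bounded_linear_Im assms[unfolded has_vector_derivative_def]] .
  then show ?thesis
    by (simp add: has_field_derivative_def mult.commute[of _ "Re f'"] mult.commute[of _ "Im f'"])
qed

lemma vd_line:
  assumes "(F has_field_derivative D) (at (a + of_real t * b))"
  shows "((\<lambda>t. F (a + of_real t * b)) has_vector_derivative (b * D)) (at t)"
proof -
  have "((\<lambda>t. a + of_real t * b) has_vector_derivative b) (at t)"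
    by (auto intro!: derivative_eq_intros)
  from field_vector_diff_chain_at[OF this assms] show ?thesis by (simp add: o_def)
qed

lemma vd_circ:
  fixes r :: complex
  assumes "(F has_field_derivative D) (at (r * exp(\<i> * of_real t)))"
  shows "((\<lambda>t. F (r * exp(\<i> * of_real t))) has_vector_derivative
           (\<i> * r * exp(\<i> * of_real t) * D)) (at t)"
proof -
  have "((\<lambda>t. r * exp(\<i> * of_real t)) has_vector_derivative (\<i> * r * exp(\<i> * of_real t))) (at t)"
  proof -
    have "((\<lambda>t. of_real t :: complex) has_vector_derivative 1) (at t)"
      by (auto intro!: derivative_eq_intros)
    moreover have "((\<lambda>z. r * exp(\<i> * z)) has_field_derivative (\<i> * r * exp(\<i> * of_real t))) (at (of_real t))"
      by (auto intro!: derivative_eq_intros)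
    ultimately show ?thesis using field_vector_diff_chain_at by (fastforce simp: o_def)
  qed
  from field_vector_diff_chain_at[OF this assms] show ?thesis by (simp add: o_def)
qed

lemma vd_normsq:
  assumes "(f has_vector_derivative f') (at t)"
  shows "((\<lambda>t. (norm (f t))^2) has_real_derivative 2 * Re (cnj (f t) * f')) (at t)"
proof -
  have e: "(\<lambda>t. (norm (f t))^2) = (\<lambda>t. (Re (f t))^2 + (Im (f t))^2)"
    by (simp add: cmod_power2)
  have "((\<lambda>t. (Re (f t))^2 + (Im (f t))^2) has_real_derivative
          (2 * Re (f t) * Re f' + 2 * Im (f t) * Im f')) (at t)"
    using assms by (auto intro!: derivative_eq_intros simp: algebra_simps)
  then show ?thesis unfolding e by (simp add: algebra_simps)
qed

lemma re_half:
  fixes w :: complex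
  assumes "norm w = 1" "w \<noteq> 1"
  shows "Re (w / (1 - w)) = - 1/2"
proof -
  have n: "(Re w)^2 + (Im w)^2 = 1" using assms(1) by (metis cmod_power2 power_one)
  have x: "Re w < 1"
  proof (rule ccontr)
    assume "\<not> Re w < 1"
    moreover have "Re w \<le> 1" using assms(1) complex_Re_le_cmod by (metis)
    ultimately have "Re w = 1" by simp
    with n have "Im w = 0" by simp
    with \<open>Re w = 1\<close> assms(2) show False by (simp add: complex_eq_iff)
  qed
  have d: "(norm (1 - w))^2 = 2 - 2 * Re w"
    using n by (simp add: cmod_power2 power2_diff algebra_simps)
  have "Re (w / (1 - w)) = (Re w * (1 - Re w) - Im w * Im w) / (norm (1 - w))^2"
    by (simp add: Re_divide cmod_power2)
  also have "\<dots> = (Re w - 1) / (2 - 2 * Re w)"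
    using n d by (simp add: algebra_simps power2_eq_square)
  also have "\<dots> = - 1/2" using x by (simp add: field_simps)
  finally show ?thesis .
qed

lemma jack:
  assumes Mh: "M holomorphic_on ball 0 1" and M0: "M 0 = 0"
    and pos: "\<And>z. z \<in> ball 0 1 \<Longrightarrow> Re (1 + z * deriv M z) > 0"
    and z: "z \<in> ball 0 1"
  shows "Re (exp (M z / 2)) > 0"
proof (rule ccontr)
  assume neg: "\<not> Re (exp (M z / 2)) > 0"
  define \<omega> where "\<omega> = (\<lambda>u. 1 - exp (- M u / 2))"
  have Md: "(M has_field_derivative deriv M u) (at u)" if "u \<in> ball 0 1" for u
    using Mh that by (auto intro!: holomorphic_derivI)
  have wd: "(\<omega> has_field_derivative deriv M u / 2 * exp (- M u / 2)) (at u)" if "u \<in> ball 0 1" for u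
    unfolding \<omega>_def using Md[OF that] by (auto intro!: derivative_eq_intros)
  have wh: "\<omega> holomorphic_on ball 0 1"
    unfolding \<omega>_def using Mh by (auto intro!: holomorphic_intros)
  have wc: "continuous_on (ball 0 1) \<omega>"
    using wh holomorphic_on_imp_continuous_on by blast
  have w0: "\<omega> 0 = 0" by (simp add: \<omega>_def M0)
  have wz: "norm (\<omega> z) \<ge> 1"
  proof -
    define q where "q = exp (M z / 2)"
    have q0: "q \<noteq> 0" by (simp add: q_def)
    have "exp (- M z / 2) = inverse q" by (simp add: q_def exp_minus)
    then have "\<omega> z = 1 - inverse q" by (simp add: \<omega>_def)
    moreover have "Re (inverse q) \<le> 0"
      using neg q0 by (simp add: q_def Re_complex_div_le_0 inverse_eq_divide divide_simps)
    ultimately have "Re (\<omega> z) \<ge> 1" by simp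
    then show ?thesis using complex_Re_le_cmod order_trans by blast
  qed
  define A where "A = {u \<in> cball 0 (norm z). 1 \<le> norm (\<omega> u)}"
  have cb: "cball 0 (norm z) \<subseteq> ball 0 1" using z by auto
  have "closed A"
    unfolding A_def
    by (rule continuous_on_closed_Collect_le) (auto intro!: continuous_intros continuous_on_subset[OF wc cb])
  then have "compact A" unfolding A_def
    by (metis (no_types, lifting) A_def bounded_cball bounded_subset compact_eq_bounded_closed mem_Collect_eq subsetI)
  moreover have "z \<in> A" using wz by (simp add: A_def)
  ultimately obtain z0 where z0A: "z0 \<in> A" and z0min: "\<And>u. u \<in> A \<Longrightarrow> norm z0 \<le> norm u"
    using compact_attains_inf[of "norm ` A"] by (metis (no_types, lifting) continuous_on_norm_id compact_continuous_image empty_iff image_iff)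
  have z0b: "z0 \<in> ball 0 1" using z0A z by (auto simp: A_def)
  have z0w: "1 \<le> norm (\<omega> z0)" using z0A by (simp add: A_def)
  define r0 where "r0 = norm z0"
  have r0pos: "r0 > 0" using z0w w0 by (auto simp: r0_def)
  have r0lt: "r0 < 1" using z0b by (simp add: r0_def)
  have small: "norm (\<omega> u) < 1" if "norm u < r0" for u
  proof (rule ccontr)
    assume "\<not> norm (\<omega> u) < 1"
    moreover have "norm u \<le> norm z" using that z0A by (auto simp: r0_def A_def)
    ultimately have "u \<in> A" by (simp add: A_def)
    then show False using z0min that by (force simp: r0_def)
  qed
  have le1: "norm (\<omega> u) \<le> 1" if "u \<in> cball 0 r0" for u
  proof -
    have "closure (ball 0 r0) \<subseteq> {u \<in> cball 0 r0. norm (\<omega> u) \<le> 1}"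
    proof (rule closure_minimal)
      show "ball 0 r0 \<subseteq> {u \<in> cball 0 r0. norm (\<omega> u) \<le> 1}"
        using small by (auto simp: less_imp_le)
      have "cball 0 r0 \<subseteq> ball 0 1" using r0lt by auto
      then show "closed {u \<in> cball 0 r0. norm (\<omega> u) \<le> 1}"
        by (intro continuous_on_closed_Collect_le) (auto intro!: continuous_intros continuous_on_subset[OF wc])
    qed
    then show ?thesis using that r0pos by (auto simp: closure_ball)
  qed
  have wz0: "norm (\<omega> z0) = 1" using le1[of z0] z0w by (simp add: r0_def)
  have schw: "norm (\<omega> (of_real t * z0)) \<le> t" if "0 \<le> t" "t < 1" for t
  proof -
    define h where "h = (\<lambda>\<zeta>. \<omega> (of_real r0 * \<zeta>))"
    have rx: "r0 * norm x < 1" if "norm x < 1" for x :: complex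
      using r0lt r0pos that by (smt (verit) mult_left_le_one_le norm_ge_zero)
    have "h holomorphic_on ball 0 1"
      unfolding h_def
      by (rule holomorphic_on_compose_gen[OF _ wh, unfolded o_def])
         (use r0lt r0pos rx in \<open>auto intro!: holomorphic_intros simp: norm_mult\<close>)
    moreover have "h 0 = 0" by (simp add: h_def w0)
    moreover have "norm (h \<zeta>) < 1" if "norm \<zeta> < 1" for \<zeta>
      unfolding h_def using that r0pos by (intro small) (auto simp: norm_mult)
    moreover have "norm (of_real t * z0 / of_real r0) < 1"
      using that r0pos by (simp add: norm_mult norm_divide r0_def)
    ultimately have "norm (h (of_real t * z0 / of_real r0)) \<le> norm (of_real t * z0 / of_real r0)"
      by (rule Schwarz_Lemma(1))
    then show ?thesis using that r0pos by (simp add: h_def norm_mult norm_divide r0_def)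
  qed
  define d where "d = deriv M z0 / 2 * exp (- M z0 / 2)"
  have wdz0: "(\<omega> has_field_derivative d) (at z0)" unfolding d_def by (rule wd[OF z0b])
  define a where "a = cnj (\<omega> z0) * z0 * d"
  \<comment> \<open>tangential derivative vanishes\<close>
  have Ima: "Im a = 0"
  proof -
    have "(\<omega> has_field_derivative d) (at (z0 * exp (\<i> * of_real 0)))" using wdz0 by simp
    from vd_normsq[OF vd_circ[OF this]]
    have D: "((\<lambda>t. (norm (\<omega> (z0 * exp (\<i> * of_real t))))^2) has_real_derivative
              2 * Re (cnj (\<omega> (z0 * exp (\<i> * of_real 0))) * (\<i> * z0 * exp (\<i> * of_real 0) * d))) (at 0)" .
    have "2 * Re (cnj (\<omega> (z0 * exp (\<i> * of_real 0))) * (\<i> * z0 * exp (\<i> * of_real 0) * d)) = 0"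
    proof (rule DERIV_local_max[OF D zero_less_one], intro allI impI)
      fix y :: real
      have "norm (\<omega> (z0 * exp (\<i> * of_real y))) \<le> 1"
        by (rule le1) (simp add: norm_mult r0_def)
      then show "(norm (\<omega> (z0 * exp (\<i> * of_real y))))^2 \<le> (norm (\<omega> (z0 * exp (\<i> * of_real 0))))^2"
        using wz0 by (simp add: power_le_one)
    qed
    then show ?thesis by (simp add: a_def algebra_simps)
  qed
  have Rea: "Re a \<ge> 1"
  proof (rule ccontr)
    assume "\<not> Re a \<ge> 1"
    have "(\<omega> has_field_derivative d) (at (0 + of_real 1 * z0))" using wdz0 by simp
    from vd_normsq[OF vd_line[OF this]]
    have D1: "((\<lambda>t. (norm (\<omega> (0 + of_real t * z0)))^2) has_real_derivative
              2 * Re (cnj (\<omega> (0 + of_real 1 * z0)) * (z0 * d))) (at 1)" .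
    have D: "((\<lambda>t. (norm (\<omega> (of_real t * z0)))^2 - t^2) has_real_derivative
              2 * Re a - 2) (at 1)"
    proof -
      have D2: "((\<lambda>t. t^2) has_real_derivative 2) (at (1::real))"
        by (auto intro!: derivative_eq_intros)
      show ?thesis using DERIV_diff[OF D1 D2] by (simp add: a_def mult.assoc)
    qed
    have "2 * Re a - 2 < 0" using \<open>\<not> Re a \<ge> 1\<close> by simp
    from DERIV_neg_dec_left[OF D this] obtain e where e: "e > 0"
      "\<And>h. h > 0 \<Longrightarrow> h < e \<Longrightarrow> (norm (\<omega> (of_real 1 * z0)))^2 - 1^2 < (norm (\<omega> (of_real (1 - h) * z0)))^2 - (1 - h)^2"
      by blast
    define h where "h = min (e/2) (1/2)"
    have h: "h > 0" "h < e" "h < 1" using e by (auto simp: h_def)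
    have "(norm (\<omega> (of_real (1 - h) * z0))) \<le> 1 - h"
      using schw[of "1 - h"] h by auto
    then have "(norm (\<omega> (of_real (1 - h) * z0)))^2 \<le> (1 - h)^2"
      by (simp add: power_mono)
    moreover have "(norm (\<omega> (of_real 1 * z0)))^2 - 1^2 = 0" using wz0 by simp
    ultimately show False using e(2)[OF h(1) h(2)] by linarith
  qed
  have ae: "a = of_real (Re a)" using Ima by (simp add: complex_eq_iff)
  have cw: "cnj (\<omega> z0) * \<omega> z0 = 1"
    using wz0 by (metis complex_norm_square mult.commute of_real_1 power_one)
  have zd: "z0 * d = a * \<omega> z0"
    using cw by (simp add: a_def algebra_simps)
  have w1: "1 - \<omega> z0 = exp (- M z0 / 2)" by (simp add: \<omega>_def)
  have w1nz: "1 - \<omega> z0 \<noteq> 0" using w1 by simp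
  have zM: "z0 * deriv M z0 = 2 * a * \<omega> z0 / (1 - \<omega> z0)"
  proof -
    have "z0 * deriv M z0 * (1 - \<omega> z0) = 2 * a * \<omega> z0"
    proof -
      have "z0 * deriv M z0 * (1 - \<omega> z0) = 2 * (z0 * d)"
        unfolding d_def w1 by simp
      then show ?thesis using zd by simp
    qed
    then show ?thesis using w1nz by (simp add: eq_divide_eq)
  qed
  have reh: "Re (\<omega> z0 / (1 - \<omega> z0)) = - 1/2"
    using re_half[OF wz0] w1nz by simp
  have "Re (1 + z0 * deriv M z0) = 1 - Re a"
  proof -
    have "2 * a * \<omega> z0 / (1 - \<omega> z0) = of_real (2 * Re a) * (\<omega> z0 / (1 - \<omega> z0))"
      by (subst ae) simp
    then have "Re (2 * a * \<omega> z0 / (1 - \<omega> z0)) = (2 * Re a) * Re (\<omega> z0 / (1 - \<omega> z0))"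
      by (metis Re_complex_of_real Im_complex_of_real mult_zero_left diff_zero times_complex.sel(1))
    then show ?thesis using reh by (simp add: zM)
  qed
  then show False using pos[OF z0b] Rea by simp
qed

definition zc :: "real \<Rightarrow> real \<Rightarrow> complex" where
  "zc r t = complex_of_real r * exp (\<i> * of_real t)"

lemma zc_norm [simp]: "r \<ge> 0 \<Longrightarrow> norm (zc r t) = r"
  by (simp add: zc_def norm_mult)

lemma zc_period [simp]: "zc r (t + 2 * pi) = zc r t"
proof -
  have "exp (\<i> * (2 * complex_of_real pi)) = 1" using exp_two_pi_i by (simp add: mult.commute)
  then show ?thesis by (simp add: zc_def distrib_left exp_add)
qed

lemma zc_ratio: "r \<noteq> 0 \<Longrightarrow> zc r t / zc r s = exp (\<i> * of_real (t - s))"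
  by (simp add: zc_def exp_diff[symmetric] algebra_simps)

lemma support:
  assumes Mh: "M holomorphic_on ball 0 1"
    and pos: "\<And>z. z \<in> ball 0 1 \<Longrightarrow> Re (1 + z * deriv M z) > 0"
    and \<psi>h: "\<psi> holomorphic_on ball 0 1"
    and \<psi>d: "\<And>z. z \<in> ball 0 1 \<Longrightarrow> deriv \<psi> z = exp (M z)"
    and r: "0 < r" "r < 1"
    and th: "t0 < t" "t < t0 + 2 * pi"
  shows "Im ((\<psi> (zc r t) - \<psi> (zc r t0)) / (\<i> * zc r t0 * exp (M (zc r t0)))) > 0"
proof -
  define T0 where "T0 = \<i> * zc r t0 * exp (M (zc r t0))"
  have T0nz: "T0 \<noteq> 0" using r by (simp add: T0_def zc_def)
  have zin: "zc r s \<in> ball 0 1" for s using r by simp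
  have Md: "(M has_field_derivative deriv M (zc r s)) (at (zc r s))" for s
    using Mh zin by (auto intro!: holomorphic_derivI)
  have \<psi>d': "(\<psi> has_field_derivative exp (M (zc r s))) (at (zc r s))" for s
    using \<psi>h zin \<psi>d by (metis holomorphic_derivI open_ball)
  define h where "h = (\<lambda>s. Im ((\<psi> (zc r s) - \<psi> (zc r t0)) / T0))"
  define \<Phi> where "\<Phi> = (\<lambda>s. (s - t0) + Im (M (zc r s)) - Im (M (zc r t0)))"
  define E where "E = (\<lambda>s. \<i> * of_real (s - t0) + M (zc r s) - M (zc r t0))"
  have hd: "(h has_real_derivative exp (Re (E s)) * sin (\<Phi> s)) (at s)" for s
  proof -
    have "((\<lambda>u. (\<psi> u - \<psi> (zc r t0)) / T0) has_field_derivative exp (M (zc r s)) / T0) (at (zc r s))"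
      using \<psi>d'[of s] T0nz by (auto intro!: derivative_eq_intros)
    from vd_Im[OF vd_circ[OF this[unfolded zc_def]]]
    have "(h has_real_derivative Im (\<i> * zc r s * (exp (M (zc r s)) / T0))) (at s)"
      by (simp add: h_def zc_def mult.assoc)
    moreover have "\<i> * zc r s * (exp (M (zc r s)) / T0) = exp (E s)"
    proof -
      have "\<i> * zc r s * (exp (M (zc r s)) / T0) = (zc r s / zc r t0) * exp (M (zc r s) - M (zc r t0))"
        using r by (simp add: T0_def exp_diff zc_def field_simps)
      also have "\<dots> = exp (E s)"
        using r by (simp add: zc_ratio E_def exp_add exp_diff)
      finally show ?thesis .
    qed
    moreover have "Im (E s) = \<Phi> s" by (simp add: E_def \<Phi>_def)
    ultimately show ?thesis by (simp add: Im_exp)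
  qed
  have \<Phi>d: "(\<Phi> has_real_derivative Re (1 + zc r s * deriv M (zc r s))) (at s)" for s
  proof -
    from vd_Im[OF vd_circ[OF Md[of s, unfolded zc_def]]]
    have I: "((\<lambda>s. Im (M (zc r s))) has_real_derivative Im (\<i> * zc r s * deriv M (zc r s))) (at s)"
      by (simp add: zc_def mult.assoc)
    have A: "((\<lambda>s. s - t0) has_real_derivative 1) (at s)" by (auto intro!: derivative_eq_intros)
    have "(\<Phi> has_real_derivative 1 + Im (\<i> * zc r s * deriv M (zc r s)) - 0) (at s)"
      unfolding \<Phi>_def by (intro DERIV_diff DERIV_add A I DERIV_const)
    then show ?thesis by simp
  qed
  have \<Phi>inc: "\<Phi> a < \<Phi> b" if "a < b" for a b
  proof (rule DERIV_pos_imp_increasing[OF that])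
    fix x show "\<exists>y. DERIV \<Phi> x :> y \<and> y > 0" using \<Phi>d[of x] pos[OF zin[of x]] by blast
  qed
  have \<Phi>0: "\<Phi> t0 = 0" by (simp add: \<Phi>_def)
  have \<Phi>2: "\<Phi> (t0 + 2 * pi) = 2 * pi" by (simp add: \<Phi>_def)
  have h0: "h t0 = 0" by (simp add: h_def)
  have h2: "h (t0 + 2 * pi) = 0" by (simp add: h_def)
  have "h t > 0"
  proof (cases "\<Phi> t \<le> pi")
    case True
    obtain \<xi> where \<xi>: "t0 < \<xi>" "\<xi> < t" "h t - h t0 = (t - t0) * (exp (Re (E \<xi>)) * sin (\<Phi> \<xi>))"
      using MVT2[OF th(1), of h "\<lambda>s. exp (Re (E s)) * sin (\<Phi> s)"] hd by blast
    have "0 < \<Phi> \<xi>" "\<Phi> \<xi> < pi" using \<Phi>inc[OF \<xi>(1)] \<Phi>inc[OF \<xi>(2)] True \<Phi>0 by auto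
    then have "sin (\<Phi> \<xi>) > 0" by (rule sin_gt_zero)
    then show ?thesis using \<xi> h0 th by simp
  next
    case False
    obtain \<xi> where \<xi>: "t < \<xi>" "\<xi> < t0 + 2 * pi"
        "h (t0 + 2 * pi) - h t = (t0 + 2 * pi - t) * (exp (Re (E \<xi>)) * sin (\<Phi> \<xi>))"
      using MVT2[OF th(2), of h "\<lambda>s. exp (Re (E s)) * sin (\<Phi> s)"] hd by blast
    have "pi < \<Phi> \<xi>" "\<Phi> \<xi> < 2 * pi" using \<Phi>inc[OF \<xi>(1)] \<Phi>inc[OF \<xi>(2)] False \<Phi>2 by auto
    then have "sin (\<Phi> \<xi> - pi) > 0" by (intro sin_gt_zero) auto
    then have "sin (\<Phi> \<xi>) < 0" by (simp add: sin_diff)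
    then have "(t0 + 2 * pi - t) * (exp (Re (E \<xi>)) * sin (\<Phi> \<xi>)) < 0"
      using th by (simp add: mult_pos_neg)
    then show ?thesis using \<xi> h2 by simp
  qed
  then show ?thesis by (simp add: h_def T0_def)
qed

locale cvx =
  fixes M \<psi> :: "complex \<Rightarrow> complex"
  assumes Mh: "M holomorphic_on ball 0 1"
    and pos: "\<And>z. z \<in> ball 0 1 \<Longrightarrow> Re (1 + z * deriv M z) > 0"
    and \<psi>h: "\<psi> holomorphic_on ball 0 1"
    and \<psi>d: "\<And>z. z \<in> ball 0 1 \<Longrightarrow> deriv \<psi> z = exp (M z)"
begin

lemma \<psi>der: "z \<in> ball 0 1 \<Longrightarrow> (\<psi> has_field_derivative exp (M z)) (at z)"
  using \<psi>h \<psi>d by (metis holomorphic_derivI open_ball)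

lemma nonconst: "\<not> (\<lambda>z. \<psi> z - w) constant_on ball 0 1"
proof
  assume "(\<lambda>z. \<psi> z - w) constant_on ball 0 1"
  then obtain k where k: "\<And>z. z \<in> ball 0 1 \<Longrightarrow> \<psi> z - w = k" by (auto simp: constant_on_def)
  have "((\<lambda>z. w + k) has_field_derivative exp (M 0)) (at 0)"
  proof (rule has_field_derivative_transform_within_open[OF \<psi>der[of 0]])
    show "\<And>x. x \<in> ball 0 1 \<Longrightarrow> \<psi> x = w + k" using k by (metis add_diff_cancel_left' diff_add_cancel add.commute)
  qed auto
  moreover have "((\<lambda>z. w + k) has_field_derivative 0) (at 0)" by simp
  ultimately have "exp (M 0) = 0" using DERIV_unique by blast
  then show False by simp
qed

lemma circ_eq: "circlepath 0 r t = zc r (2 * pi * t)"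
  by (simp add: circlepath zc_def mult.commute mult.left_commute)

lemma count:
  assumes r: "0 < r" "r < 1" and w: "w \<notin> \<psi> ` sphere 0 r"
  shows "finite {p \<in> ball 0 r. \<psi> p = w}"
    and "winding_number (\<psi> \<circ> circlepath 0 r) w = of_nat (card {p \<in> ball 0 r. \<psi> p = w})"
proof -
  define \<rho> where "\<rho> = (r + 1) / 2"
  have \<rho>: "r < \<rho>" "\<rho> < 1" using r by (auto simp: \<rho>_def)
  define f where "f = (\<lambda>z. \<psi> z - w)"
  define pz where "pz = {p \<in> ball 0 \<rho>. f p = 0}"
  have fh: "f holomorphic_on ball 0 1" unfolding f_def using \<psi>h by (auto intro!: holomorphic_intros)
  have fin0: "finite {p \<in> cball 0 \<rho>. f p = 0}"
  proof -
    have "cball (0::complex) \<rho> \<subseteq> ball 0 1" using \<rho> by auto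
    from holomorphic_compact_finite_zeros[OF fh open_ball connected_ball compact_cball this nonconst[of w, folded f_def]]
    show ?thesis .
  qed
  have finpz: "finite pz" unfolding pz_def by (rule finite_subset[OF _ fin0]) auto
  have sub: "{p \<in> ball 0 r. \<psi> p = w} \<subseteq> pz" using \<rho> by (auto simp: pz_def f_def)
  show fin: "finite {p \<in> ball 0 r. \<psi> p = w}" by (rule finite_subset[OF sub finpz])
  have fd: "deriv f z = exp (M z)" if "z \<in> ball 0 1" for z
  proof -
    have "(f has_field_derivative exp (M z)) (at z)" unfolding f_def using \<psi>der[OF that]
      by (auto intro!: derivative_eq_intros)
    then show ?thesis by (rule DERIV_imp_deriv)
  qed
  have zo: "zorder f p = 1" if "p \<in> pz" for p
  proof -
    have pin: "p \<in> ball 0 1" using that \<rho> by (auto simp: pz_def)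
    show ?thesis
    proof (rule zorder_zero_eqI[OF fh open_ball pin])
      show "\<And>i. i < nat 1 \<Longrightarrow> (deriv ^^ i) f p = 0" using that by (auto simp: pz_def)
      show "(deriv ^^ nat 1) f p \<noteq> 0" using fd[OF pin] by simp
    qed simp
  qed
  have pimg: "path_image (circlepath 0 r) \<subseteq> ball 0 \<rho> - pz"
    using r \<rho> w by (auto simp: pz_def f_def)
  have AP: "contour_integral (circlepath 0 r) (\<lambda>x. deriv f x * 1 / f x) =
      2 * pi * \<i> * (\<Sum>p\<in>pz. winding_number (circlepath 0 r) p * 1 * zorder f p)"
  proof -
    have e: "{w \<in> ball 0 \<rho>. f w = 0 \<or> w \<in> {}} = pz" by (simp add: pz_def)
    have "contour_integral (circlepath 0 r) (\<lambda>x. deriv f x * (\<lambda>_. 1) x / f x) =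
      2 * pi * \<i> * (\<Sum>p\<in>{w \<in> ball 0 \<rho>. f w = 0 \<or> w \<in> {}}. winding_number (circlepath 0 r) p * (\<lambda>_. 1) p * zorder f p)"
    proof (rule argument_principle)
      show "f holomorphic_on ball 0 \<rho> - {}" using fh \<rho> by (auto elim!: holomorphic_on_subset)
      show "path_image (circlepath 0 r) \<subseteq> ball 0 \<rho> - {w \<in> ball 0 \<rho>. f w = 0 \<or> w \<in> {}}"
        using pimg e by simp
      show "\<forall>z. z \<notin> ball 0 \<rho> \<longrightarrow> winding_number (circlepath 0 r) z = 0"
      proof (intro allI impI)
        fix z :: complex assume "z \<notin> ball 0 \<rho>"
        then show "winding_number (circlepath 0 r) z = 0"
          using \<rho> r by (intro winding_number_zero_outside[of _ "cball 0 r"]) auto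
      qed
      show "finite {w \<in> ball 0 \<rho>. f w = 0 \<or> w \<in> {}}" using finpz e by simp
    qed auto
    then show ?thesis using e by simp
  qed
  have wn: "winding_number (circlepath 0 r) p * 1 * of_int (zorder f p) = (if p \<in> ball 0 r then 1 else 0)"
    if "p \<in> pz" for p
  proof -
    have "norm p \<noteq> r" using that pimg by auto
    then show ?thesis using that zo r
      by (cases "norm p < r") (auto intro!: winding_number_circlepath winding_number_zero_outside[of _ "cball 0 r"])
  qed
  have "(\<Sum>p\<in>pz. winding_number (circlepath 0 r) p * 1 * zorder f p) = (\<Sum>p\<in>pz. if p \<in> ball 0 r then 1 else 0)"
    using wn by (intro sum.cong) auto
  also have "\<dots> = of_nat (card {p \<in> pz. p \<in> ball 0 r})"
    using finpz by (simp add: sum.If_cases Int_def)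
  also have "{p \<in> pz. p \<in> ball 0 r} = {p \<in> ball 0 r. \<psi> p = w}"
    using \<rho> by (auto simp: pz_def f_def)
  finally have S: "(\<Sum>p\<in>pz. winding_number (circlepath 0 r) p * 1 * zorder f p) = of_nat (card {p \<in> ball 0 r. \<psi> p = w})" .
  have an: "\<psi> analytic_on ball 0 1" using \<psi>h by (simp add: analytic_on_open)
  have pi1: "path_image (circlepath 0 r) \<subseteq> ball 0 1" using r by auto
  have vp: "valid_path (\<psi> \<circ> circlepath 0 r)"
    by (rule valid_path_compose_analytic[OF valid_path_circlepath an pi1])
  have wnot: "w \<notin> path_image (\<psi> \<circ> circlepath 0 r)"
    using w r by (auto simp: path_image_compose)
  have "winding_number (\<psi> \<circ> circlepath 0 r) w = 1/(2*pi*\<i>) * contour_integral (\<psi> \<circ> circlepath 0 r) (\<lambda>u. 1/(u - w))"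
    by (rule winding_number_valid_path[OF vp wnot])
  also have "contour_integral (\<psi> \<circ> circlepath 0 r) (\<lambda>u. 1/(u - w)) = contour_integral (circlepath 0 r) (\<lambda>z. deriv \<psi> z * (1/(\<psi> z - w)))"
    by (rule contour_integral_comp_analyticW[OF an valid_path_circlepath pi1])
  also have "\<dots> = contour_integral (circlepath 0 r) (\<lambda>x. deriv f x * 1 / f x)"
  proof (rule contour_integral_eq)
    fix x assume "x \<in> path_image (circlepath 0 r)"
    then have "x \<in> ball 0 1" using pi1 by auto
    then show "deriv \<psi> x * (1/(\<psi> x - w)) = deriv f x * 1 / f x" using fd[OF \<open>x \<in> ball 0 1\<close>] by (simp add: \<psi>d f_def)
  qed
  finally show "winding_number (\<psi> \<circ> circlepath 0 r) w = of_nat (card {p \<in> ball 0 r. \<psi> p = w})"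
    using AP S by (simp add: o_def)
qed

end

lemma zc_period_int: "zc r (t + 2 * pi * of_int k) = zc r t"
proof -
  have "exp ((2 * of_int k * pi) * \<i>) = 1" by (rule exp_integer_2pi) simp
  then have "exp (\<i> * (2 * complex_of_real pi * of_int k)) = 1" by (simp add: mult_ac)
  then show ?thesis by (simp add: zc_def distrib_left exp_add)
qed

lemma Im_ofr_div: "Im (complex_of_real a * z / T) = a * Im (z / T)"
proof -
  have "complex_of_real a * z / T = a *\<^sub>R (z / T)" by (simp add: scaleR_conv_of_real)
  then show ?thesis by simp
qed

lemma convex_hp:
  fixes c T :: complex
  shows "convex ({u. Im ((u - c) / T) > 0} \<union> {c})"
proof -
  define L where "L = (\<lambda>u. Im ((u - c) / T))"
  have lin: "L (a *\<^sub>R x + b *\<^sub>R y) = a * L x + b * L y" if "a + b = 1" for a b x y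
  proof -
    have "a *\<^sub>R x + b *\<^sub>R y - c = a *\<^sub>R (x - c) + b *\<^sub>R (y - c)"
    proof -
      have h1: "of_real a + of_real b = (1::complex)" using that by (metis of_real_add of_real_1)
      have "a *\<^sub>R x + b *\<^sub>R y - c = a *\<^sub>R x + b *\<^sub>R y - (of_real a + of_real b) * c" using h1 by simp
      then show ?thesis by (simp add: algebra_simps scaleR_conv_of_real)
    qed
    then show ?thesis by (simp add: L_def add_divide_distrib scaleR_conv_of_real Im_ofr_div)
  qed
  have Lc: "L c = 0" by (simp add: L_def)
  show ?thesis
    unfolding convex_def
  proof (intro ballI allI impI)
    fix x y and a b :: real
    assume x: "x \<in> {u. Im ((u - c) / T) > 0} \<union> {c}" and y: "y \<in> {u. Im ((u - c) / T) > 0} \<union> {c}"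
      and a: "0 \<le> a" and b: "0 \<le> b" and ab: "a + b = 1"
    have x': "x = c \<or> L x > 0" and y': "y = c \<or> L y > 0" using x y by (auto simp: L_def)
    show "a *\<^sub>R x + b *\<^sub>R y \<in> {u. Im ((u - c) / T) > 0} \<union> {c}"
    proof (cases "a *\<^sub>R x + b *\<^sub>R y = c")
      case False
      have "L (a *\<^sub>R x + b *\<^sub>R y) > 0"
      proof -
        have "a * L x + b * L y > 0"
        proof (cases "x = c")
          case True
          then have "y \<noteq> c \<or> a + b \<noteq> 1" using False by (auto simp: scaleR_conv_of_real simp flip: distrib_right of_real_add)
          then have "L y > 0" using y' ab by auto
          moreover have "b > 0"
          proof (rule ccontr)
            assume "\<not> 0 < b" then have "b = 0" using b by simp
            then show False using False True ab by simp
          qed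
          ultimately show ?thesis using True Lc by simp
        next
          case xnc: False
          then have "L x > 0" using x' by auto
          show ?thesis
          proof (cases "y = c")
            case True
            have "a > 0"
            proof (rule ccontr)
              assume "\<not> 0 < a" then have "a = 0" using a by simp
              then show False using False True ab by simp
            qed
            then show ?thesis using True Lc \<open>L x > 0\<close> by simp
          next
            case False
            then have "L y > 0" using y' by auto
            then show ?thesis using \<open>L x > 0\<close> a b ab
              by (metis add_pos_nonneg add_nonneg_pos linorder_not_le mult_nonneg_nonneg mult_pos_pos order.order_iff_strict zero_less_one)
          qed
        qed
        then show ?thesis using lin[OF ab] by simp
      qed
      then show ?thesis by (simp add: L_def)
    qed simp
  qed
qed

context cvx begin

lemma curve_support:
  assumes r: "0 < r" "r < 1"
  shows "\<psi> (zc r t) = \<psi> (zc r t0) \<or> Im ((\<psi> (zc r t) - \<psi> (zc r t0)) / (\<i> * zc r t0 * exp (M (zc r t0)))) > 0"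
proof -
  define k where "k = floor ((t - t0) / (2 * pi))"
  define t' where "t' = t - 2 * pi * of_int k"
  have "of_int k \<le> (t - t0) / (2 * pi)" "(t - t0) / (2 * pi) < of_int k + 1"
    unfolding k_def by linarith+
  then have t': "t0 \<le> t'" "t' < t0 + 2 * pi"
    by (auto simp: t'_def field_simps)
  have e: "zc r t = zc r t'" using zc_period_int[of r t' k] by (simp add: t'_def)
  show ?thesis
  proof (cases "t' = t0")
    case True then show ?thesis using e by simp
  next
    case False
    then have "t0 < t'" using t' by simp
    from support[OF Mh pos \<psi>h \<psi>d r this t'(2)] show ?thesis using e by simp
  qed
qed

lemma sphere_zc: "r \<ge> 0 \<Longrightarrow> u \<in> sphere 0 r \<Longrightarrow> \<exists>t. u = zc r t"
  using path_image_circlepath[of 0 r] circ_eq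
  by (auto simp: path_image_def image_def)

lemma wind_outside:
  assumes r: "0 < r" "r < 1" and w: "w \<notin> \<psi> ` sphere 0 r"
    and t0: "Im ((w - \<psi> (zc r t0)) / (\<i> * zc r t0 * exp (M (zc r t0)))) \<le> 0"
  shows "winding_number (\<psi> \<circ> circlepath 0 r) w = 0"
proof -
  define c where "c = \<psi> (zc r t0)"
  define T where "T = \<i> * zc r t0 * exp (M (zc r t0))"
  have an: "\<psi> analytic_on ball 0 1" using \<psi>h by (simp add: analytic_on_open)
  have pi1: "path_image (circlepath 0 r) \<subseteq> ball 0 1" using r by auto
  have vp: "valid_path (\<psi> \<circ> circlepath 0 r)"
    by (rule valid_path_compose_analytic[OF valid_path_circlepath an pi1])
  show ?thesis
  proof (rule winding_number_zero_outside[OF valid_path_imp_path[OF vp] convex_hp[of c T]])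
    show "pathfinish (\<psi> \<circ> circlepath 0 r) = pathstart (\<psi> \<circ> circlepath 0 r)"
      by (simp add: pathfinish_compose pathstart_compose)
    have "zc r t0 \<in> sphere 0 r" using r by simp
    then have "w \<noteq> c" using w by (auto simp: c_def)
    then show "w \<notin> {u. 0 < Im ((u - c) / T)} \<union> {c}" using t0 by (simp add: c_def T_def)
    show "path_image (\<psi> \<circ> circlepath 0 r) \<subseteq> {u. 0 < Im ((u - c) / T)} \<union> {c}"
    proof
      fix u assume "u \<in> path_image (\<psi> \<circ> circlepath 0 r)"
      then obtain t where "u = \<psi> (zc r (2 * pi * t))" by (auto simp: path_image_def circ_eq)
      then show "u \<in> {u. 0 < Im ((u - c) / T)} \<union> {c}"
        using curve_support[OF r, of "2 * pi * t" t0] by (auto simp: c_def T_def)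
    qed
  qed
qed

lemma wind_inside:
  assumes r: "0 < r" "r < 1"
    and S: "\<And>t. Im ((w - \<psi> (zc r t)) / (\<i> * zc r t * exp (M (zc r t)))) > 0"
  shows "winding_number (\<psi> \<circ> circlepath 0 r) w = 1"
proof -
  define F where "F = (\<lambda>z. w + z * exp (M z))"
  have an: "\<psi> analytic_on ball 0 1" using \<psi>h by (simp add: analytic_on_open)
  have Fh: "F holomorphic_on ball 0 1" unfolding F_def using Mh by (auto intro!: holomorphic_intros)
  have anF: "F analytic_on ball 0 1" using Fh by (simp add: analytic_on_open)
  have pi1: "path_image (circlepath 0 r) \<subseteq> ball 0 1" using r by auto
  have vp: "valid_path (\<psi> \<circ> circlepath 0 r)"
    by (rule valid_path_compose_analytic[OF valid_path_circlepath an pi1])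
  have vpF: "valid_path (F \<circ> circlepath 0 r)"
    by (rule valid_path_compose_analytic[OF valid_path_circlepath anF pi1])
  have hom: "homotopic_loops (-{w}) (\<psi> \<circ> circlepath 0 r) (F \<circ> circlepath 0 r)"
  proof (rule homotopic_loops_linear)
    show "path (\<psi> \<circ> circlepath 0 r)" "path (F \<circ> circlepath 0 r)"
      using vp vpF valid_path_imp_path by auto
    show "pathfinish (\<psi> \<circ> circlepath 0 r) = pathstart (\<psi> \<circ> circlepath 0 r)"
         "pathfinish (F \<circ> circlepath 0 r) = pathstart (F \<circ> circlepath 0 r)"
      by (simp_all add: pathfinish_compose pathstart_compose)
    fix t :: real
    define z where "z = zc r (2 * pi * t)"
    define c where "c = \<psi> z"
    define E where "E = z * exp (M z)"
    have Enz: "E \<noteq> 0" using r by (simp add: E_def z_def zc_def)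
    have pos: "Re ((c - w) / E) > 0"
    proof -
      have e1: "\<i> * z * exp (M z) = \<i> * E" by (simp add: E_def mult.assoc)
      have "(c - w) / E = \<i> * ((c - w) / (\<i> * z * exp (M z)))"
        unfolding e1
      proof -
        have "\<i> * ((c - w) / (\<i> * E)) = (\<i> * (c - w)) / (\<i> * E)" by (rule times_divide_eq_right)
        also have "\<dots> = (c - w) / E" by (rule nonzero_mult_divide_mult_cancel_left) simp
        finally show "(c - w) / E = \<i> * ((c - w) / (\<i> * E))" by simp
      qed
      then have A: "Re ((c - w) / E) = - Im ((c - w) / (\<i> * z * exp (M z)))"
        by (simp only: Re_i_times)
      have B: "(w - c) / (\<i> * z * exp (M z)) = - ((c - w) / (\<i> * z * exp (M z)))"
        by (metis minus_diff_eq minus_divide_left)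
      have "Im ((w - c) / (\<i> * z * exp (M z))) > 0" using S[of "2 * pi * t"] by (simp only: c_def z_def)
      then show ?thesis unfolding A using B by simp
    qed
    show "closed_segment ((\<psi> \<circ> circlepath 0 r) t) ((F \<circ> circlepath 0 r) t) \<subseteq> - {w}"
    proof
      fix u assume "u \<in> closed_segment ((\<psi> \<circ> circlepath 0 r) t) ((F \<circ> circlepath 0 r) t)"
      then obtain a where a: "0 \<le> a" "a \<le> 1" "u = (1 - a) *\<^sub>R c + a *\<^sub>R (w + E)"
        by (auto simp: closed_segment_def circ_eq c_def z_def E_def F_def)
      show "u \<in> - {w}"
      proof
        assume "u \<in> {w}"
        then have "(1 - a) *\<^sub>R (c - w) + a *\<^sub>R E = 0"
          using a by (simp add: algebra_simps scaleR_conv_of_real)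
        then have "((1 - a) *\<^sub>R (c - w) + a *\<^sub>R E) / E = 0" by simp
        then have "(1 - a) *\<^sub>R ((c - w) / E) + a *\<^sub>R 1 = 0"
          using Enz by (simp add: scaleR_conv_of_real add_divide_distrib)
        then have "Re ((1 - a) *\<^sub>R ((c - w) / E) + a *\<^sub>R 1) = 0" by simp
        then have "(1 - a) * Re ((c - w) / E) + a = 0" by simp
        moreover have "(1 - a) * Re ((c - w) / E) + a > 0"
        proof (cases "a = 0")
          case True then show ?thesis using pos by simp
        next
          case False then show ?thesis using a pos
            by (smt (verit) mult_nonneg_nonneg)
        qed
        ultimately show False by simp
      qed
    qed
  qed
  have "winding_number (\<psi> \<circ> circlepath 0 r) w = winding_number (F \<circ> circlepath 0 r) w"
    by (rule winding_number_homotopic_loops[OF hom])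
  also have "\<dots> = 1"
  proof -
    have wnot: "w \<notin> path_image (F \<circ> circlepath 0 r)"
      using homotopic_loops_imp_subset[OF hom] by auto
    have Fd: "deriv F z = (1 + z * deriv M z) * exp (M z)" if "z \<in> ball 0 1" for z
    proof -
      have "(M has_field_derivative deriv M z) (at z)" using Mh that by (auto intro!: holomorphic_derivI)
      then have "(F has_field_derivative (1 + z * deriv M z) * exp (M z)) (at z)"
        unfolding F_def by (auto intro!: derivative_eq_intros simp: algebra_simps)
      then show ?thesis by (rule DERIV_imp_deriv)
    qed
    have I1: "((\<lambda>u. 1 / (u - 0)) has_contour_integral (2 * of_real pi * \<i> * 1)) (circlepath 0 r)"
      using Cauchy_integral_circlepath_simple[of "\<lambda>_. 1" 0 r 0] r by simp
    have I2: "((deriv M) has_contour_integral (M (pathfinish (circlepath 0 r)) - M (pathstart (circlepath 0 r)))) (circlepath 0 r)"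
    proof (rule contour_integral_primitive[OF _ valid_path_circlepath pi1])
      fix x assume "x \<in> ball (0::complex) 1"
      then show "(M has_field_derivative deriv M x) (at x within ball 0 1)"
        using Mh by (auto intro!: holomorphic_derivI)
    qed
    have I: "((\<lambda>z. deriv F z * (1 / (F z - w))) has_contour_integral (2 * of_real pi * \<i>)) (circlepath 0 r)"
    proof (rule has_contour_integral_eq)
      show "((\<lambda>z. 1 / (z - 0) + deriv M z) has_contour_integral (2 * of_real pi * \<i>)) (circlepath 0 r)"
        using has_contour_integral_add[OF I1 I2] by simp
      fix x assume x: "x \<in> path_image (circlepath 0 r)"
      then have xb: "x \<in> ball 0 1" and xnz: "x \<noteq> 0" using pi1 r by auto
      have "F x - w = x * exp (M x)" by (simp add: F_def)
      then have "deriv F x * (1 / (F x - w)) = (1 + x * deriv M x) * exp (M x) / (x * exp (M x))"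
        by (simp add: Fd[OF xb])
      also have "\<dots> = (1 + x * deriv M x) / x" by simp
      also have "\<dots> = 1 / (x - 0) + deriv M x" using xnz by (simp add: add_divide_distrib)
      finally show "1 / (x - 0) + deriv M x = deriv F x * (1 / (F x - w))" by simp
    qed
    have "winding_number (F \<circ> circlepath 0 r) w = 1/(2*pi*\<i>) * contour_integral (F \<circ> circlepath 0 r) (\<lambda>u. 1/(u - w))"
      by (rule winding_number_valid_path[OF vpF wnot])
    also have "contour_integral (F \<circ> circlepath 0 r) (\<lambda>u. 1/(u - w)) = contour_integral (circlepath 0 r) (\<lambda>z. deriv F z * (1/(F z - w)))"
      by (rule contour_integral_comp_analyticW[OF anF valid_path_circlepath pi1])
    also have "\<dots> = 2 * of_real pi * \<i>" by (rule contour_integral_unique[OF I])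
    finally show ?thesis by (simp add: o_def)
  qed
  finally show ?thesis .
qed

end

lemma convex_hp_open:
  fixes c T :: complex
  shows "convex {u. Im ((u - c) / T) > 0}"
proof -
  define L where "L = (\<lambda>u. Im ((u - c) / T))"
  have lin: "L (a *\<^sub>R x + b *\<^sub>R y) = a * L x + b * L y" if "a + b = 1" for a b x y
  proof -
    have "a *\<^sub>R x + b *\<^sub>R y - c = a *\<^sub>R (x - c) + b *\<^sub>R (y - c)"
    proof -
      have h1: "of_real a + of_real b = (1::complex)" using that by (metis of_real_add of_real_1)
      have "a *\<^sub>R x + b *\<^sub>R y - c = a *\<^sub>R x + b *\<^sub>R y - (of_real a + of_real b) * c" using h1 by simp
      then show ?thesis by (simp add: algebra_simps scaleR_conv_of_real)
    qed
    then show ?thesis by (simp add: L_def add_divide_distrib scaleR_conv_of_real Im_ofr_div)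
  qed
  show ?thesis
    unfolding convex_def
  proof (intro ballI allI impI)
    fix x y and a b :: real
    assume x: "x \<in> {u. Im ((u - c) / T) > 0}" and y: "y \<in> {u. Im ((u - c) / T) > 0}"
      and a: "0 \<le> a" and b: "0 \<le> b" and ab: "a + b = 1"
    have "L x > 0" "L y > 0" using x y by (auto simp: L_def)
    then have "a * L x + b * L y > 0" using a b ab
      by (metis add_pos_nonneg add_nonneg_pos linorder_not_le mult_nonneg_nonneg mult_pos_pos order.order_iff_strict zero_less_one)
    then show "a *\<^sub>R x + b *\<^sub>R y \<in> {u. Im ((u - c) / T) > 0}" using lin[OF ab] by (simp add: L_def)
  qed
qed

context cvx begin

lemma card_cases:
  assumes r: "0 < r" "r < 1" and w: "w \<notin> \<psi> ` sphere 0 r"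
  shows "card {p \<in> ball 0 r. \<psi> p = w} = (if (\<forall>t. Im ((w - \<psi> (zc r t)) / (\<i> * zc r t * exp (M (zc r t)))) > 0) then 1 else 0)"
proof (cases "\<forall>t. Im ((w - \<psi> (zc r t)) / (\<i> * zc r t * exp (M (zc r t)))) > 0")
  case True
  from wind_inside[OF r] True have "winding_number (\<psi> \<circ> circlepath 0 r) w = 1" by blast
  with count(2)[OF r w] True show ?thesis by simp
next
  case False
  then obtain t0 where "Im ((w - \<psi> (zc r t0)) / (\<i> * zc r t0 * exp (M (zc r t0)))) \<le> 0"
    by (auto simp: not_less)
  from wind_outside[OF r w this] count(2)[OF r w] False show ?thesis by simp
qed

lemma avoid:
  assumes W: "finite W" and m: "0 \<le> m" "m < 1"
  shows "\<exists>r. m < r \<and> r < 1 \<and> (\<forall>w\<in>W. w \<notin> \<psi> ` sphere 0 r)"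
proof -
  define \<rho> where "\<rho> = (m + 1) / 2"
  have \<rho>: "m < \<rho>" "\<rho> < 1" using m by (auto simp: \<rho>_def)
  have cb: "cball (0::complex) \<rho> \<subseteq> ball 0 1" using \<rho> by auto
  define Z where "Z = (\<Union>w\<in>W. {p \<in> cball 0 \<rho>. \<psi> p - w = 0})"
  have fh: "(\<lambda>z. \<psi> z - w) holomorphic_on ball 0 1" for w using \<psi>h by (auto intro!: holomorphic_intros)
  have "finite Z" unfolding Z_def
    using W holomorphic_compact_finite_zeros[OF fh open_ball connected_ball compact_cball cb nonconst] by auto
  then have fR: "finite (norm ` Z)" by simp
  have "infinite {m<..<\<rho>}" using \<rho> by simp
  then obtain r where r: "r \<in> {m<..<\<rho>}" "r \<notin> norm ` Z"
    using fR by (metis finite_subset subsetI)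
  show ?thesis
  proof (intro exI conjI ballI)
    show "m < r" "r < 1" using r \<rho> by auto
    fix w assume "w \<in> W"
    show "w \<notin> \<psi> ` sphere 0 r"
    proof
      assume "w \<in> \<psi> ` sphere 0 r"
      then obtain u where "u \<in> sphere 0 r" "\<psi> u = w" by auto
      then have "u \<in> Z" using \<open>w \<in> W\<close> r by (auto simp: Z_def)
      then show False using r \<open>u \<in> sphere 0 r\<close> by force
    qed
  qed
qed

lemma psi_inj: "inj_on \<psi> (ball 0 1)"
proof (rule inj_onI, rule ccontr)
  fix z1 z2 assume z: "z1 \<in> ball 0 1" "z2 \<in> ball 0 1" "\<psi> z1 = \<psi> z2" "z1 \<noteq> z2"
  define m where "m = max (norm z1) (norm z2)"
  have m: "0 \<le> m" "m < 1" using z by (auto simp: m_def le_max_iff_disj)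
  obtain r where r: "m < r" "r < 1" "\<psi> z1 \<notin> \<psi> ` sphere 0 r" using avoid[of "{\<psi> z1}" m] m by auto
  have r0: "0 < r" using r m by simp
  have "{z1, z2} \<subseteq> {p \<in> ball 0 r. \<psi> p = \<psi> z1}" using z r by (auto simp: m_def)
  then have "card {z1, z2} \<le> card {p \<in> ball 0 r. \<psi> p = \<psi> z1}"
    by (rule card_mono[OF count(1)[OF r0 r(2) r(3)]])
  moreover have "card {p \<in> ball 0 r. \<psi> p = \<psi> z1} \<le> 1"
    using card_cases[OF r0 r(2) r(3)] by simp
  ultimately show False using z(4) by simp
qed

lemma psi_seg:
  assumes z: "z1 \<in> ball 0 1" "z2 \<in> ball 0 1"
  shows "closed_segment (\<psi> z1) (\<psi> z2) \<subseteq> \<psi> ` ball 0 1"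
proof -
  define m where "m = max (norm z1) (norm z2)"
  have m: "0 \<le> m" "m < 1" using z by (auto simp: m_def le_max_iff_disj)
  obtain r where r: "m < r" "r < 1" "\<forall>w\<in>{\<psi> z1, \<psi> z2}. w \<notin> \<psi> ` sphere 0 r"
    using avoid[of "{\<psi> z1, \<psi> z2}" m] m by auto
  have r0: "0 < r" using r m by simp
  define K where "K = (\<Inter>t. {u. Im ((u - \<psi> (zc r t)) / (\<i> * zc r t * exp (M (zc r t)))) > 0})"
  have convK: "convex K" unfolding K_def by (intro convex_INT ballI convex_hp_open)
  have inK: "\<psi> z \<in> K" if "z \<in> {z1, z2}" for z
  proof -
    have nz: "\<psi> z \<notin> \<psi> ` sphere 0 r" using r that by auto
    have "z \<in> {p \<in> ball 0 r. \<psi> p = \<psi> z}" using that r z by (auto simp: m_def)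
    then have "{p \<in> ball 0 r. \<psi> p = \<psi> z} \<noteq> {}" by blast
    then have "card {p \<in> ball 0 r. \<psi> p = \<psi> z} > 0"
      using count(1)[OF r0 r(2) nz] by (simp add: card_gt_0_iff)
    then have "card {p \<in> ball 0 r. \<psi> p = \<psi> z} \<noteq> 0" by simp
    then have "\<forall>t. Im ((\<psi> z - \<psi> (zc r t)) / (\<i> * zc r t * exp (M (zc r t)))) > 0"
      using card_cases[OF r0 r(2) nz] by presburger
    then show ?thesis unfolding K_def by blast
  qed
  have "closed_segment (\<psi> z1) (\<psi> z2) \<subseteq> K"
    by (rule closed_segment_subset[OF inK inK convK]) simp_all
  moreover have "K \<subseteq> \<psi> ` ball 0 1"
  proof
    fix u assume u: "u \<in> K"
    have nz: "u \<notin> \<psi> ` sphere 0 r"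
    proof
      assume "u \<in> \<psi> ` sphere 0 r"
      then obtain v where v: "v \<in> sphere 0 r" "u = \<psi> v" by auto
      obtain t where "v = zc r t" using sphere_zc[of r v] r0 v(1) by (meson less_imp_le)
      have "Im ((u - \<psi> (zc r t)) / (\<i> * zc r t * exp (M (zc r t)))) > 0" using u unfolding K_def by blast
      then show False using v \<open>v = zc r t\<close> by simp
    qed
    have "\<forall>t. Im ((u - \<psi> (zc r t)) / (\<i> * zc r t * exp (M (zc r t)))) > 0"
      using u unfolding K_def by blast
    then have "card {p \<in> ball 0 r. \<psi> p = u} = 1" using card_cases[OF r0 r(2) nz] by presburger
    then obtain p where "{p \<in> ball 0 r. \<psi> p = u} = {p}" by (rule card_1_singletonE)
    then have "p \<in> {p \<in> ball 0 r. \<psi> p = u}" by simp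
    then have "p \<in> ball 0 r" "\<psi> p = u" by auto
    then show "u \<in> \<psi> ` ball 0 1" using r by force
  qed
  ultimately show ?thesis by blast
qed

end

lemma seg_mem:
  fixes v1 v2 :: complex
  assumes "0 \<le> t" "t \<le> 1"
  shows "v1 + of_real t * (v2 - v1) \<in> closed_segment v1 v2"
proof -
  have "v1 + of_real t * (v2 - v1) = (1 - t) *\<^sub>R v1 + t *\<^sub>R v2"
    by (simp add: scaleR_conv_of_real algebra_simps)
  then show ?thesis using assms unfolding closed_segment_def by blast
qed

lemma core:
  assumes Lh: "L holomorphic_on ball 0 1" and L0: "L 0 = 0"
    and Lpos: "\<And>z. z \<in> ball 0 1 \<Longrightarrow> Re (1 + z * deriv L z) > -1/2"
    and Fh: "F holomorphic_on ball 0 1" and Fd: "\<And>z. z \<in> ball 0 1 \<Longrightarrow> deriv F z = exp (L z)"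
  shows "inj_on F (ball 0 1)"
proof -
  define M where "M = (\<lambda>z. (2/3) * L z)"
  have Mh: "M holomorphic_on ball 0 1" unfolding M_def using Lh by (auto intro!: holomorphic_intros)
  have M0: "M 0 = 0" by (simp add: M_def L0)
  have Ld: "(L has_field_derivative deriv L z) (at z)" if "z \<in> ball 0 1" for z
    using Lh that by (auto intro!: holomorphic_derivI)
  have dM: "deriv M z = (2/3) * deriv L z" if "z \<in> ball 0 1" for z
  proof -
    have "(M has_field_derivative (2/3) * deriv L z) (at z)" unfolding M_def
      using Ld[OF that] by (auto intro!: derivative_eq_intros)
    then show ?thesis by (rule DERIV_imp_deriv)
  qed
  have Mpos: "Re (1 + z * deriv M z) > 0" if "z \<in> ball 0 1" for z
  proof -
    have "1 + z * deriv M z = (1/3::real) *\<^sub>R 1 + (2/3::real) *\<^sub>R (1 + z * deriv L z)"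
      unfolding dM[OF that] by (simp add: scaleR_conv_of_real field_simps)
    then have A: "Re (1 + z * deriv M z) = 1/3 + (2/3) * Re (1 + z * deriv L z)"
      by simp
    moreover have "Re (1 + z * deriv L z) > -1/2" using Lpos[OF that] .
    ultimately show ?thesis by (simp only: A)
  qed
  have eM: "(exp \<circ> M) holomorphic_on ball 0 1" unfolding o_def using Mh by (intro holomorphic_intros)
  obtain \<psi> where \<psi>0: "\<And>x. x \<in> ball 0 1 \<Longrightarrow> (\<psi> has_field_derivative (exp \<circ> M) x) (at x within ball 0 1)"
    by (rule holomorphic_convex_primitive'[OF convex_ball open_ball eM]) iprover
  have \<psi>der: "(\<psi> has_field_derivative exp (M x)) (at x)" if "x \<in> ball 0 1" for x
    using \<psi>0[OF that] unfolding at_within_open[OF that open_ball] o_def .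
  have \<psi>h: "\<psi> holomorphic_on ball 0 1"
    unfolding holomorphic_on_open[OF open_ball] using \<psi>der by blast
  have \<psi>d: "deriv \<psi> z = exp (M z)" if "z \<in> ball 0 1" for z using \<psi>der[OF that] by (rule DERIV_imp_deriv)
  interpret cvx M \<psi>
  proof
    show "M holomorphic_on ball 0 1" by (rule Mh)
    show "\<And>z. z \<in> ball 0 1 \<Longrightarrow> 0 < Re (1 + z * deriv M z)" by (rule Mpos)
    show "\<psi> holomorphic_on ball 0 1" by (rule \<psi>h)
    show "\<And>z. z \<in> ball 0 1 \<Longrightarrow> deriv \<psi> z = exp (M z)" by (rule \<psi>d)
  qed
  have jk: "Re (exp (M z / 2)) > 0" if "z \<in> ball 0 1" for z
    by (rule jack[OF Mh M0 Mpos that])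
  obtain g where gh: "g holomorphic_on (\<psi> ` ball 0 1)"
    and gd: "\<And>z. z \<in> ball 0 1 \<Longrightarrow> deriv \<psi> z * deriv g (\<psi> z) = 1"
    and gi: "\<And>z. z \<in> ball 0 1 \<Longrightarrow> g (\<psi> z) = z"
    by (rule holomorphic_has_inverse[OF \<psi>h open_ball psi_inj]) iprover
  have \<Omega>: "open (\<psi> ` ball 0 1)" by (rule open_mapping_thm3[OF \<psi>h open_ball psi_inj])
  define H where "H = (\<lambda>v. F (g v))"
  have Fder: "(F has_field_derivative exp (L z)) (at z)" if "z \<in> ball 0 1" for z
    using holomorphic_derivI[OF Fh open_ball that] Fd[OF that] by simp
  have Hder: "(H has_field_derivative exp (M z / 2)) (at (\<psi> z))" if "z \<in> ball 0 1" for z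
  proof -
    have "\<psi> z \<in> \<psi> ` ball 0 1" using that by blast
    then have g1: "(g has_field_derivative deriv g (\<psi> z)) (at (\<psi> z))"
      by (rule holomorphic_derivI[OF gh \<Omega>])
    have F1: "(F has_field_derivative exp (L z)) (at (g (\<psi> z)))" using Fder[OF that] gi[OF that] by simp
    from DERIV_chain2[OF F1 g1]
    have "(H has_field_derivative exp (L z) * deriv g (\<psi> z)) (at (\<psi> z))"
      by (simp add: H_def)
    moreover have "deriv g (\<psi> z) = exp (- M z)"
    proof -
      have "exp (M z) * deriv g (\<psi> z) = 1" using gd[OF that] \<psi>d[OF that] by simp
      then have "inverse (exp (M z)) = deriv g (\<psi> z)" by (rule inverse_unique)
      then show ?thesis by (simp add: exp_minus)
    qed
    moreover have "exp (L z) * exp (- M z) = exp (M z / 2)"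
    proof -
      have "L z + - M z = M z / 2" by (simp add: M_def field_simps)
      then show ?thesis by (metis exp_add)
    qed
    ultimately show ?thesis by simp
  qed
  show ?thesis
  proof (rule inj_onI, rule ccontr)
    fix z1 z2 assume z: "z1 \<in> ball 0 1" "z2 \<in> ball 0 1" "F z1 = F z2" "z1 \<noteq> z2"
    define v1 where "v1 = \<psi> z1"
    define v2 where "v2 = \<psi> z2"
    have vne: "v2 - v1 \<noteq> 0"
    proof
      assume "v2 - v1 = 0"
      then have "\<psi> z2 = \<psi> z1" by (simp add: v1_def v2_def)
      then have "z2 = z1" using inj_onD[OF psi_inj] z(1,2) by blast
      with z(4) show False by simp
    qed
    have seg: "closed_segment v1 v2 \<subseteq> \<psi> ` ball 0 1" unfolding v1_def v2_def by (rule psi_seg[OF z(1,2)])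
    define u where "u = (\<lambda>t. Re (H (v1 + of_real t * (v2 - v1)) / (v2 - v1)))"
    have ud: "(u has_real_derivative Re (exp (M (g (v1 + of_real t * (v2 - v1))) / 2))) (at t)"
      if "0 \<le> t" "t \<le> 1" for t
    proof -
      have "v1 + of_real t * (v2 - v1) \<in> closed_segment v1 v2"
        using that by (rule seg_mem)
      with seg obtain z where zb: "z \<in> ball 0 1" and zp: "v1 + of_real t * (v2 - v1) = \<psi> z" by auto
      have "((\<lambda>v. H v / (v2 - v1)) has_field_derivative exp (M z / 2) / (v2 - v1)) (at (v1 + of_real t * (v2 - v1)))"
        unfolding zp using Hder[OF zb] vne by (auto intro!: derivative_eq_intros)
      from vd_Re[OF vd_line[OF this]]
      have "(u has_real_derivative Re ((v2 - v1) * (exp (M z / 2) / (v2 - v1)))) (at t)"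
        by (simp add: u_def)
      then show ?thesis using vne zp gi[OF zb] by simp
    qed
    obtain \<xi> where \<xi>: "0 < \<xi>" "\<xi> < 1" "u 1 - u 0 = (1 - 0) * Re (exp (M (g (v1 + of_real \<xi> * (v2 - v1))) / 2))"
      using MVT2[OF zero_less_one ud] by blast
    have "g (v1 + of_real \<xi> * (v2 - v1)) \<in> ball 0 1"
    proof -
      have "v1 + of_real \<xi> * (v2 - v1) \<in> closed_segment v1 v2"
        using \<xi> by (intro seg_mem) auto
      with seg obtain z where zb: "z \<in> ball 0 1" and zp: "v1 + of_real \<xi> * (v2 - v1) = \<psi> z" by auto
      then show ?thesis using gi[OF zb] by simp
    qed
    then have "u 1 - u 0 > 0" using \<xi>(3) jk by simp
    moreover have "u 1 = u 0"
      using z gi by (simp add: u_def H_def v1_def v2_def)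
    ultimately show False by simp
  qed
qed

lemma re_z_frac:
  fixes z :: complex
  assumes "norm z < 1"
  shows "Re (z / (1 - z)) > -1/2"
proof -
  define u where "u = 1 - z"
  have unz: "u \<noteq> 0" using assms by (auto simp: u_def)
  have "(norm (u - 1))^2 < 1" using assms by (simp add: u_def power_less_one_iff abs_square_less_1)
  then have "(Re u - 1)^2 + (Im u)^2 < 1" by (simp add: cmod_power2)
  then have A: "(Re u)^2 + (Im u)^2 < 2 * Re u" by (simp add: power2_diff)
  have pos: "(Re u)^2 + (Im u)^2 > 0" using unz by (simp add: complex_eq_iff add_pos_nonneg sum_power2_gt_zero_iff)
  have "z / (1 - z) = 1 / u - 1" using unz by (simp add: u_def field_simps)
  then have "Re (z / (1 - z)) = Re u / ((Re u)^2 + (Im u)^2) - 1"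
    by (simp add: Re_divide cmod_power2)
  moreover have "Re u / ((Re u)^2 + (Im u)^2) > 1/2" using A pos by (simp add: field_simps)
  ultimately show ?thesis by linarith
qed

lemma not_nonpos_1mz:
  fixes z :: complex
  assumes "norm z < 1"
  shows "1 - z \<notin> \<real>\<^sub>\<le>\<^sub>0"
proof -
  have "Re z < 1" using assms complex_Re_le_cmod le_less_trans by blast
  then show ?thesis by (auto simp: complex_nonpos_Reals_iff)
qed

lemma Re_ofr_div: "Re (complex_of_real a * z / T) = a * Re (z / T)"
proof -
  have "complex_of_real a * z / T = a *\<^sub>R (z / T)" by (simp add: scaleR_conv_of_real)
  then show ?thesis by simp
qed

theorem theorem2p7:
  fixes lam beta :: real and f :: "complex \<Rightarrow> complex"
  assumes "-1/2 \<le> lam" and "lam < 1"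
    and "0 \<le> beta" and "beta \<le> 2 * lam + 1"
    and "starlike_of_order lam f"
  shows "classS (cesaro beta f)"
proof -
  note st = assms(5)[unfolded starlike_of_order_def classA_def]
  have fh: "f holomorphic_on ball 0 1" and f0: "f 0 = 0" and fd0: "deriv f 0 = 1"
    using st by auto
  have fnz: "\<And>z. z \<in> ball 0 1 \<Longrightarrow> z \<noteq> 0 \<Longrightarrow> f z \<noteq> 0" using st by blast
  have fpos: "\<And>z. z \<in> ball 0 1 \<Longrightarrow> z \<noteq> 0 \<Longrightarrow> Re (z * deriv f z / f z) > lam" using st by blast
  define q where "q = (\<lambda>z. if z = 0 then deriv f 0 else (f z - f 0) / (z - 0))"
  have qh: "q holomorphic_on ball 0 1"
    unfolding q_def by (rule pole_lemma[OF fh]) simp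
  have qv: "q z = (if z = 0 then 1 else f z / z)" for z by (simp add: q_def f0 fd0)
  have qnz: "q z \<noteq> 0" if "z \<in> ball 0 1" for z using fnz[OF that] by (simp add: qv)
  obtain Lq where Lqh: "Lq holomorphic_on ball 0 1" and eLq: "\<And>x. x \<in> ball 0 1 \<Longrightarrow> exp (Lq x) = q x"
    by (rule holomorphic_logarithm_exists[OF convex_ball open_ball qh qnz, of 0]) auto
  have nn: "1 - z \<notin> \<real>\<^sub>\<le>\<^sub>0" if "z \<in> ball 0 1" for z :: complex using not_nonpos_1mz[of z] that by simp
  define L where "L = (\<lambda>z. Lq z - of_real beta * Ln (1 - z) - Lq 0)"
  have Lh: "L holomorphic_on ball 0 1"
    unfolding L_def using Lqh nn by (intro holomorphic_intros) auto
  have L0: "L 0 = 0" by (simp add: L_def)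
  have expL: "exp (L z) = q z / (1 - z) powr of_real beta" if "z \<in> ball 0 1" for z
  proof -
    have "1 - z \<noteq> 0" using nn[OF that] by auto
    then have "(1 - z) powr of_real beta = exp (of_real beta * Ln (1 - z))" by (simp add: powr_def)
    moreover have "exp (Lq 0) = 1" using eLq[of 0] by (simp add: qv)
    ultimately show ?thesis using eLq[OF that] by (simp add: L_def exp_diff)
  qed
  have integrand: "f w / (w * (1 - w) powr of_real beta) = exp (L w)" if "w \<in> ball 0 1" "w \<noteq> 0" for w
    using that expL[OF that(1)] by (simp add: qv)
  have eLh: "(exp \<circ> L) holomorphic_on ball 0 1" unfolding o_def using Lh by (intro holomorphic_intros)
  obtain G where G0: "\<And>x. x \<in> ball 0 1 \<Longrightarrow> (G has_field_derivative (exp \<circ> L) x) (at x within ball 0 1)"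
    by (rule holomorphic_convex_primitive'[OF convex_ball open_ball eLh]) iprover
  have Gder: "(G has_field_derivative exp (L x)) (at x)" if "x \<in> ball 0 1" for x
    using G0[OF that] unfolding at_within_open[OF that open_ball] o_def .
  have Gh: "G holomorphic_on ball 0 1"
    unfolding holomorphic_on_open[OF open_ball] using Gder by blast
  have Gd: "deriv G z = exp (L z)" if "z \<in> ball 0 1" for z using Gder[OF that] by (rule DERIV_imp_deriv)
  have ces: "cesaro beta f z = G z - G 0" if z: "z \<in> ball 0 1" for z
  proof (cases "z = 0")
    case True then show ?thesis by (simp add: cesaro_def)
  next
    case False
    have segb: "closed_segment 0 z \<subseteq> ball 0 1"
      using z by (intro closed_segment_subset convex_ball) auto
    have "cesaro beta f z = contour_integral (linepath 0 z) (\<lambda>w. exp (L w))"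
      unfolding cesaro_def
    proof (rule contour_integral_spike_finite_simple_path[of "{0}"])
      show "simple_path (linepath 0 z)" using False by (intro simple_path_linepath) simp
      fix w assume "w \<in> path_image (linepath 0 z) - {0}"
      then have "w \<in> ball 0 1" "w \<noteq> 0" using segb by auto
      then show "f w / (w * (1 - w) powr of_real beta) = exp (L w)" by (rule integrand)
    qed simp_all
    also have "\<dots> = G (pathfinish (linepath 0 z)) - G (pathstart (linepath 0 z))"
    proof (rule contour_integral_unique, rule contour_integral_primitive)
      show "\<And>x. x \<in> ball 0 1 \<Longrightarrow> (G has_field_derivative exp (L x)) (at x within ball 0 1)"
        using Gder by (simp add: has_field_derivative_at_within)
      show "valid_path (linepath 0 z)" by simp
      show "path_image (linepath 0 z) \<subseteq> ball 0 1" using segb by simp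
    qed
    finally show ?thesis by simp
  qed
  have Lpos: "Re (1 + z * deriv L z) > -1/2" if z: "z \<in> ball 0 1" for z
  proof (cases "z = 0")
    case True then show ?thesis by simp
  next
    case False
    have fdz: "(f has_field_derivative deriv f z) (at z)" by (rule holomorphic_derivI[OF fh open_ball z])
    have Lqd: "(Lq has_field_derivative deriv Lq z) (at z)" by (rule holomorphic_derivI[OF Lqh open_ball z])
    have fz: "f z \<noteq> 0" by (rule fnz[OF z False])
    have q1: "(q has_field_derivative exp (Lq z) * deriv Lq z) (at z)"
    proof (rule has_field_derivative_transform_within_open[of "\<lambda>w. exp (Lq w)" _ _ "ball 0 1"])
      show "((\<lambda>w. exp (Lq w)) has_field_derivative exp (Lq z) * deriv Lq z) (at z)"
        using Lqd by (auto intro!: derivative_eq_intros)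
    qed (use z eLq in auto)
    have q2: "(q has_field_derivative (deriv f z * z - f z) / z^2) (at z)"
    proof (rule has_field_derivative_transform_within_open[of "\<lambda>w. f w / w" _ _ "ball 0 1 - {0}"])
      show "((\<lambda>w. f w / w) has_field_derivative (deriv f z * z - f z) / z^2) (at z)"
        using fdz False by (auto intro!: derivative_eq_intros simp: power2_eq_square)
      show "open (ball 0 1 - {0::complex})" by auto
      show "z \<in> ball 0 1 - {0}" using z False by auto
      show "\<And>x. x \<in> ball 0 1 - {0} \<Longrightarrow> f x / x = q x" by (simp add: qv)
    qed
    have "exp (Lq z) * deriv Lq z = (deriv f z * z - f z) / z^2" using DERIV_unique[OF q1 q2] .
    moreover have "exp (Lq z) = f z / z" using eLq[OF z] False by (simp add: qv)
    ultimately have dLq: "z * deriv Lq z = z * deriv f z / f z - 1"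
      using False fz by (simp add: field_simps power2_eq_square)
    have Ld: "(L has_field_derivative deriv Lq z + of_real beta / (1 - z)) (at z)"
    proof -
      have "(Ln has_field_derivative inverse (1 - z)) (at (1 - z))" by (rule has_field_derivative_Ln[OF nn[OF z]])
      then have "((\<lambda>w. Ln (1 - w)) has_field_derivative inverse (1 - z) * (-1)) (at z)"
        using nn[OF z] by (auto intro!: derivative_eq_intros)
      then show ?thesis unfolding L_def using Lqd nn[OF z]
        by (auto intro!: derivative_eq_intros simp: field_simps)
    qed
    have "1 + z * deriv L z = z * deriv f z / f z + of_real beta * (z / (1 - z))"
      using DERIV_imp_deriv[OF Ld] dLq by (simp add: algebra_simps)
    then have "Re (1 + z * deriv L z) = Re (z * deriv f z / f z) + beta * Re (z / (1 - z))"
      by (simp add: Re_ofr_div)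
    moreover have "Re (z * deriv f z / f z) > lam" by (rule fpos[OF z False])
    moreover have "beta * Re (z / (1 - z)) \<ge> beta * (-1/2)"
      using re_z_frac[of z] z assms(3) by (intro mult_left_mono) auto
    ultimately show ?thesis using assms(4) by linarith
  qed
  have injG: "inj_on G (ball 0 1)"
    by (rule core[OF Lh L0 Lpos Gh Gd])
  show ?thesis
    unfolding classS_def classA_def
  proof (intro conjI)
    show "cesaro beta f holomorphic_on ball 0 1"
      by (rule holomorphic_transform[of "\<lambda>z. G z - G 0"]) (use Gh ces in \<open>auto intro!: holomorphic_intros\<close>)
    show "cesaro beta f 0 = 0" by (simp add: cesaro_def)
    have "(cesaro beta f has_field_derivative exp (L 0)) (at 0)"
    proof (rule has_field_derivative_transform_within_open[of "\<lambda>z. G z - G 0" _ _ "ball 0 1"])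
      show "((\<lambda>z. G z - G 0) has_field_derivative exp (L 0)) (at 0)"
        using Gder[of 0] by (auto intro!: derivative_eq_intros)
    qed (use ces in auto)
    then show "deriv (cesaro beta f) 0 = 1" using L0 by (simp add: DERIV_imp_deriv)
    show "inj_on (cesaro beta f) (ball 0 1)"
    proof (rule inj_onI)
      fix x y assume "x \<in> ball 0 1" "y \<in> ball 0 1" "cesaro beta f x = cesaro beta f y"
      then have "G x = G y" using ces by simp
      then show "x = y" using inj_onD[OF injG _ \<open>x \<in> ball 0 1\<close> \<open>y \<in> ball 0 1\<close>] by simp
    qed
  qed
qed


end
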